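(* Every equal-neighbor matrix $P\in\mathbb{R}^{n\times n}$ satisfies, for all $k\in\mathbb{N}$, $$\Big\|\tfrac1nP^k\Big\|_1\le 2\,\Big\|\tfrac1nP\Big\|_1^{1/2}.$$
   Context: An $n\times n$ matrix $P$ is equal-neighbor if $P=\mathrm{diag}(W\mathbf{1}_n)^{-1}W$ for some symmetric matrix $W\in\{0,1\}^{n\times n}$ with at least one nonzero entry in each row (diagonal entries allowed). For a nonnegative matrix $A$, $\|A\|_1=\max_j\sum_iA_{ij}$ (maximum column sum). *)

theory Defs
  imports "HOL-Analysis.Analysis"
begin

primrec matpow :: "real^'n^'n \<Rightarrow> nat \<Rightarrow> real^'n^'n" where
  "matpow A 0 = mat 1"
| "matpow A (Suc k) = A ** matpow A k"

definition diag_mat :: "real^'n \<Rightarrow> real^'n^'n" where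
  "diag_mat d = (\<chi> i j. if i = j then d $ i else 0)"

definition norm1 :: "real^'n^'m \<Rightarrow> real" where
  "norm1 A = Max (range (\<lambda>j. \<Sum>i\<in>UNIV. \<bar>A $ i $ j\<bar>))"

definition equal_neighbor :: "real^'n^'n \<Rightarrow> bool" where
  "equal_neighbor P \<longleftrightarrow> (\<exists>W :: real^'n^'n.
      (\<forall>i j. W $ i $ j \<in> {0, 1}) \<and> transpose W = W \<and>
      (\<forall>i. \<exists>j. W $ i $ j \<noteq> 0) \<and>
      P = matrix_inv (diag_mat (W *v (\<chi> i. 1))) ** W)"

end

theory Submission
  imports Defs
begin

definition cs :: "real^'n^'n \<Rightarrow> 'n \<Rightarrow> real" where
  "cs A j = (\<Sum>i\<in>UNIV. A$i$j)"

lemma matpow_Suc': "matpow A (Suc k) = matpow A k ** A"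
proof (induction k)
  case 0 then show ?case by simp
next
  case (Suc k)
  have "matpow A (Suc (Suc k)) = A ** (matpow A k ** A)" using Suc by simp
  also have "\<dots> = matpow A (Suc k) ** A" by (simp add: matrix_mul_assoc)
  finally show ?case .
qed

lemma diag_mul: "(diag_mat a ** B) $ i $ j = a$i * B$i$j"
proof -
  have "(diag_mat a ** B) $ i $ j = (\<Sum>k\<in>UNIV. (if i = k then a$i else 0) * B$k$j)"
    by (simp add: matrix_matrix_mult_def diag_mat_def)
  also have "\<dots> = (\<Sum>k\<in>UNIV. if k = i then a$i * B$i$j else 0)"
    by (rule sum.cong) auto
  also have "\<dots> = a$i * B$i$j" by simp
  finally show ?thesis .
qed

lemma diag_diag: "diag_mat a ** diag_mat b = diag_mat (\<chi> i. a$i * b$i)"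
  by (simp add: vec_eq_iff diag_mul) (simp add: diag_mat_def)

lemma diag_one: "(\<forall>i. a$i = 1) \<Longrightarrow> diag_mat a = mat 1"
  by (simp add: vec_eq_iff diag_mat_def mat_def)

lemma inv_diag:
  fixes a :: "real^'n"
  assumes "\<forall>i. a$i \<noteq> 0"
  shows "matrix_inv (diag_mat a) = diag_mat (\<chi> i. 1 / a$i)"
proof -
  let ?E = "diag_mat (\<chi> i. 1 / a$i) :: real^'n^'n"
  have 1: "diag_mat a ** ?E = mat 1" using assms by (simp add: diag_diag diag_one)
  have 2: "?E ** diag_mat a = mat 1" using assms by (simp add: diag_diag diag_one)
  have ex: "\<exists>A'. diag_mat a ** A' = mat 1 \<and> A' ** diag_mat a = mat 1" using 1 2 by blast
  have uq: "A' = ?E" if "diag_mat a ** A' = mat 1" for A' :: "real^'n^'n"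
  proof -
    have "A' = (?E ** diag_mat a) ** A'" using 2 by simp
    also have "\<dots> = ?E ** (diag_mat a ** A')" by (simp add: matrix_mul_assoc)
    finally show ?thesis using that by simp
  qed
  show ?thesis unfolding matrix_inv_def
    using someI_ex[OF ex] uq by blast
qed

lemma nonneg_mul:
  fixes A B :: "real^'n^'n"
  assumes "\<forall>i j. A$i$j \<ge> 0" "\<forall>i j. B$i$j \<ge> 0"
  shows "(A ** B)$i$j \<ge> 0"
  using assms by (simp add: matrix_matrix_mult_def sum_nonneg)

lemma matpow_nonneg:
  fixes A :: "real^'n^'n"
  assumes "\<forall>i j. A$i$j \<ge> 0"
  shows "\<forall>i j. matpow A k $i$j \<ge> 0"
  by (induction k) (auto simp: mat_def assms nonneg_mul)

lemma cs_mul: "cs (A ** B) j = (\<Sum>l\<in>UNIV. cs A l * B$l$j)"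
proof -
  have "cs (A ** B) j = (\<Sum>i\<in>UNIV. \<Sum>l\<in>UNIV. A$i$l * B$l$j)"
    by (simp add: cs_def matrix_matrix_mult_def)
  also have "\<dots> = (\<Sum>l\<in>UNIV. \<Sum>i\<in>UNIV. A$i$l * B$l$j)" by (rule sum.swap)
  also have "\<dots> = (\<Sum>l\<in>UNIV. cs A l * B$l$j)" by (simp add: cs_def sum_distrib_right)
  finally show ?thesis .
qed

lemma cs_one: "cs (mat 1) j = 1"
  unfolding cs_def mat_def by simp

lemma step:
  fixes W P :: "real^'n^'n" and d s :: "'n \<Rightarrow> real"
  assumes W01: "\<forall>i j. W$i$j \<in> {0,1}" and sym: "\<forall>i j. W$i$j = W$j$i"
    and dd: "\<forall>i. d i = (\<Sum>j\<in>UNIV. W$i$j)" and dpos: "\<forall>i. d i \<ge> 1"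
    and PW: "\<forall>i j. P$i$j = W$i$j / d i"
  shows "(\<Sum>j\<in>UNIV. (\<Sum>l\<in>UNIV. s l * P$l$j)^2 / d j) \<le> (\<Sum>l\<in>UNIV. (s l)^2 / d l)"
proof -
  have WW: "W$i$j * W$i$j = W$i$j" for i j using W01 by (cases "W$i$j = 0") auto
  have WW2: "W$i$j * (W$i$j * x) = W$i$j * x" for i j x by (metis WW mult.assoc)
  have W2: "(W$i$j)^2 = W$i$j" for i j by (simp add: power2_eq_square WW)
  have pt: "(\<Sum>l\<in>UNIV. s l * P$l$j)^2 / d j \<le> (\<Sum>l\<in>UNIV. W$l$j * ((s l)^2 / (d l)^2))" for j
  proof -
    have eqS: "(\<Sum>l\<in>UNIV. s l * P$l$j) = (\<Sum>l\<in>UNIV. W$l$j * (W$l$j * s l / d l))"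
    proof (rule sum.cong)
      fix l
      show "s l * P$l$j = W$l$j * (W$l$j * s l / d l)"
        using W01[rule_format, of l j] by (auto simp: PW)
    qed simp
    have "(\<Sum>l\<in>UNIV. s l * P$l$j)^2 \<le> (\<Sum>l\<in>UNIV. (W$l$j)^2) * (\<Sum>l\<in>UNIV. (W$l$j * s l / d l)^2)"
      unfolding eqS by (rule Cauchy_Schwarz_ineq_sum)
    also have "(\<Sum>l\<in>UNIV. (W$l$j)^2) = d j"
    proof -
      have "(\<Sum>l\<in>UNIV. (W$l$j)^2) = (\<Sum>l\<in>UNIV. W$j$l)"
        by (rule sum.cong) (simp_all add: W2 sym[rule_format, of _ j])
      thus ?thesis using dd by simp
    qed
    also have "(\<Sum>l\<in>UNIV. (W$l$j * s l / d l)^2) = (\<Sum>l\<in>UNIV. W$l$j * ((s l)^2 / (d l)^2))"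
      by (rule sum.cong) (simp_all add: power_divide power_mult_distrib W2)
    finally have "(\<Sum>l\<in>UNIV. s l * P$l$j)^2 \<le> d j * (\<Sum>l\<in>UNIV. W$l$j * ((s l)^2 / (d l)^2))" .
    moreover have "d j > 0" using dpos[rule_format, of j] by linarith
    ultimately show ?thesis by (simp add: divide_le_eq mult.commute)
  qed
  have "(\<Sum>j\<in>UNIV. (\<Sum>l\<in>UNIV. s l * P$l$j)^2 / d j) \<le> (\<Sum>j\<in>UNIV. \<Sum>l\<in>UNIV. W$l$j * ((s l)^2 / (d l)^2))"
    by (rule sum_mono) (rule pt)
  also have "\<dots> = (\<Sum>l\<in>UNIV. \<Sum>j\<in>UNIV. W$l$j * ((s l)^2 / (d l)^2))"
    by (rule sum.swap)
  also have "\<dots> = (\<Sum>l\<in>UNIV. (\<Sum>j\<in>UNIV. W$l$j) * ((s l)^2 / (d l)^2))"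
    by (simp only: sum_distrib_right)
  also have "\<dots> = (\<Sum>l\<in>UNIV. (s l)^2 / d l)"
  proof (rule sum.cong)
    fix l :: 'n
    have "d l > 0" using dpos[rule_format, of l] by linarith
    thus "(\<Sum>j\<in>UNIV. W$l$j) * ((s l)^2 / (d l)^2) = (s l)^2 / d l"
      using dd by (simp add: power2_eq_square field_simps)
  qed simp
  finally show ?thesis .
qed

lemma iter:
  fixes W P :: "real^'n^'n" and d :: "'n \<Rightarrow> real"
  assumes W01: "\<forall>i j. W$i$j \<in> {0,1}" and sym: "\<forall>i j. W$i$j = W$j$i"
    and dd: "\<forall>i. d i = (\<Sum>j\<in>UNIV. W$i$j)" and dpos: "\<forall>i. d i \<ge> 1"
    and PW: "\<forall>i j. P$i$j = W$i$j / d i"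
  shows "(\<Sum>j\<in>UNIV. (cs (matpow P r) j)^2 / d j) \<le> real CARD('n)"
proof (induction r)
  case 0
  have "(\<Sum>j\<in>UNIV. (cs (matpow P 0) j)^2 / d j) \<le> (\<Sum>j\<in>(UNIV::'n set). 1)"
  proof (rule sum_mono)
    fix j :: 'n
    show "(cs (matpow P 0) j)^2 / d j \<le> 1" using dpos[rule_format, of j] by (simp add: cs_one)
  qed
  thus ?case by simp
next
  case (Suc r)
  have "(\<Sum>j\<in>UNIV. (cs (matpow P (Suc r)) j)^2 / d j)
      = (\<Sum>j\<in>UNIV. (\<Sum>l\<in>UNIV. cs (matpow P r) l * P$l$j)^2 / d j)"
    by (simp only: matpow_Suc' cs_mul)
  also have "\<dots> \<le> (\<Sum>l\<in>UNIV. (cs (matpow P r) l)^2 / d l)"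
    by (rule step[OF W01 sym dd dpos PW])
  finally show ?case using Suc by simp
qed

lemma norm1_le:
  fixes A :: "real^'n^'m"
  assumes "\<And>j. (\<Sum>i\<in>UNIV. \<bar>A $ i $ j\<bar>) \<le> b"
  shows "norm1 A \<le> b"
  unfolding norm1_def using assms by (subst Max_le_iff) auto

lemma norm1_ge:
  fixes A :: "real^'n^'m"
  shows "(\<Sum>i\<in>UNIV. \<bar>A $ i $ j\<bar>) \<le> norm1 A"
  unfolding norm1_def by (rule Max_ge) auto

theorem lemma7:
  fixes P :: "real^'n^'n" and k :: nat
  assumes "equal_neighbor P"
  shows "norm1 ((1 / real CARD('n)) *\<^sub>R matpow P k)
           \<le> 2 * sqrt (norm1 ((1 / real CARD('n)) *\<^sub>R P))"
proof -
  obtain W :: "real^'n^'n" where W01: "\<forall>i j. W $ i $ j \<in> {0, 1}" and tW: "transpose W = W"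
    and nz: "\<forall>i. \<exists>j. W $ i $ j \<noteq> 0"
    and Pdef: "P = matrix_inv (diag_mat (W *v (\<chi> i. 1))) ** W"
    using assms unfolding equal_neighbor_def by blast
  define d where "d i = (\<Sum>j\<in>UNIV. W$i$j)" for i
  define n where "n = real CARD('n)"
  define M where "M = norm1 ((1 / n) *\<^sub>R P)"
  have npos: "n \<ge> 1" unfolding n_def by simp
  have sym: "\<forall>i j. W$i$j = W$j$i" using tW by (metis transpose_def vec_lambda_beta)
  have Wnn: "W$i$j \<ge> 0" for i j using W01[rule_format, of i j] by auto
  have Wle: "W$i$j \<le> 1" for i j using W01[rule_format, of i j] by auto
  have dpos: "\<forall>i. d i \<ge> 1"
  proof
    fix i
    obtain j where "W$i$j \<noteq> 0" using nz by blast
    hence "W$i$j = 1" using W01 by auto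
    moreover have "W$i$j \<le> d i" unfolding d_def
      by (rule member_le_sum) (auto simp: Wnn)
    ultimately show "d i \<ge> 1" by simp
  qed
  have dle: "d i \<le> n" for i
  proof -
    have "d i \<le> (\<Sum>j\<in>(UNIV::'n set). 1)" unfolding d_def by (rule sum_mono) (simp add: Wle)
    thus ?thesis by (simp add: n_def)
  qed
  have Wv: "W *v (\<chi> i. 1) = (\<chi> i. d i)"
    by (simp add: vec_eq_iff matrix_vector_mult_def d_def)
  have PW: "\<forall>i j. P$i$j = W$i$j / d i"
  proof (intro allI)
    fix i j
    have "P = diag_mat (\<chi> i. 1 / d i) ** W"
      unfolding Pdef Wv using dpos
      by (subst inv_diag) (auto, smt (verit))
    thus "P$i$j = W$i$j / d i" by (simp add: diag_mul)
  qed
  have Pnn: "\<forall>i j. P$i$j \<ge> 0" using PW Wnn dpos by (smt (verit) divide_nonneg_nonneg)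
  have colM: "(\<Sum>l\<in>UNIV. W$l$j / d l) \<le> n * M" for j
  proof -
    have "(\<Sum>i\<in>UNIV. \<bar>((1 / n) *\<^sub>R P) $ i $ j\<bar>) \<le> M" unfolding M_def by (rule norm1_ge)
    moreover have "(\<Sum>i\<in>UNIV. \<bar>((1 / n) *\<^sub>R P) $ i $ j\<bar>) = (1/n) * (\<Sum>l\<in>UNIV. W$l$j / d l)"
      using npos Pnn dpos by (simp add: PW sum_distrib_left Wnn abs_mult order.trans[OF zero_le_one])
    ultimately have "(\<Sum>l\<in>UNIV. W$l$j / d l) = n * (\<Sum>i\<in>UNIV. \<bar>((1 / n) *\<^sub>R P) $ i $ j\<bar>)"
        and "(\<Sum>i\<in>UNIV. \<bar>((1 / n) *\<^sub>R P) $ i $ j\<bar>) \<le> M"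
      using npos by simp_all
    thus ?thesis using npos by (simp add: mult_left_mono)
  qed
  have Mlow: "1 / n \<le> sqrt M"
  proof -
    obtain j :: 'n where True by blast
    obtain l where "W$j$l \<noteq> 0" using nz by blast
    hence W1: "W$l$j = 1" using W01 sym by auto
    have "W$l$j / d l \<le> (\<Sum>l\<in>UNIV. W$l$j / d l)"
      by (rule member_le_sum) (auto intro: divide_nonneg_nonneg simp: Wnn dpos order.trans[OF zero_le_one])
    moreover have "1 / n \<le> W$l$j / d l" using W1 dle[of l] dpos[rule_format, of l]
      by (simp add: frac_le)
    ultimately have "1 / n \<le> n * M" using colM[of j] by linarith
    hence "1 / n^2 \<le> M" using npos by (simp add: field_simps power2_eq_square)
    hence "sqrt (1 / n^2) \<le> sqrt M" by (rule real_sqrt_le_mono)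
    thus ?thesis using npos by (simp add: real_sqrt_divide)
  qed
  have Mpos: "sqrt M > 0" using Mlow npos by (smt (verit) divide_pos_pos)
  hence Mnn: "sqrt M \<ge> 0" by simp
  have M0: "M \<ge> 0" using Mpos by simp
  have main: "norm1 ((1 / n) *\<^sub>R matpow P k) \<le> 2 * sqrt M"
  proof (cases k)
    case 0
    show ?thesis unfolding 0
    proof (rule norm1_le)
      fix j :: 'n
      have "(\<Sum>i\<in>UNIV. \<bar>((1 / n) *\<^sub>R matpow P 0) $ i $ j\<bar>) = (\<Sum>i\<in>UNIV. if i = j then 1 / n else 0)"
        using npos by (intro sum.cong) (auto simp: mat_def)
      hence "(\<Sum>i\<in>UNIV. \<bar>((1 / n) *\<^sub>R matpow P 0) $ i $ j\<bar>) = (1/n) * cs (mat 1) j"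
        by (simp add: cs_one)
      thus "(\<Sum>i\<in>UNIV. \<bar>((1 / n) *\<^sub>R matpow P 0) $ i $ j\<bar>) \<le> 2 * sqrt M"
        using Mlow Mnn by (simp only: cs_one; linarith)
    qed
  next
    case (Suc r)
    show ?thesis unfolding Suc
    proof (rule norm1_le)
      fix j :: 'n
      define s where "s l = cs (matpow P r) l" for l
      have nnk: "\<forall>i j. matpow P (Suc r) $ i $ j \<ge> 0" by (rule matpow_nonneg[OF Pnn])
      have e1: "(\<Sum>i\<in>UNIV. \<bar>((1 / n) *\<^sub>R matpow P (Suc r)) $ i $ j\<bar>) = (1/n) * cs (matpow P (Suc r)) j"
        using npos nnk unfolding cs_def by (simp add: sum_distrib_left)
      have c: "cs (matpow P (Suc r)) j = (\<Sum>l\<in>UNIV. (W$l$j / sqrt (d l)) * (s l / sqrt (d l)))"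
        unfolding matpow_Suc' cs_mul s_def
      proof (rule sum.cong)
        fix l
        have dl: "d l > 0" using dpos[rule_format, of l] by linarith
        hence sq: "sqrt (d l) * sqrt (d l) = d l" by simp
        have "W $ l $ j / sqrt (d l) * (cs (matpow P r) l / sqrt (d l)) = (W $ l $ j * cs (matpow P r) l) / d l"
          by (simp only: times_divide_times_eq sq)
        thus "cs (matpow P r) l * P $ l $ j = W $ l $ j / sqrt (d l) * (cs (matpow P r) l / sqrt (d l))"
          using dl by (simp add: PW mult.commute)
      qed simp
      have CS: "(cs (matpow P (Suc r)) j)^2 \<le> (\<Sum>l\<in>UNIV. (W$l$j / sqrt (d l))^2) * (\<Sum>l\<in>UNIV. (s l / sqrt (d l))^2)"
        unfolding c by (rule Cauchy_Schwarz_ineq_sum)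
      have X: "(\<Sum>l\<in>UNIV. (W$l$j / sqrt (d l))^2) = (\<Sum>l\<in>UNIV. W$l$j / d l)"
      proof (rule sum.cong)
        fix l
        have "d l > 0" using dpos[rule_format, of l] by linarith
        moreover have "W$l$j * W$l$j = W$l$j" using W01[rule_format, of l j] by auto
        ultimately show "(W$l$j / sqrt (d l))^2 = W$l$j / d l"
          by (simp add: power_divide power2_eq_square)
      qed simp
      have Y: "(\<Sum>l\<in>UNIV. (s l / sqrt (d l))^2) = (\<Sum>l\<in>UNIV. (s l)^2 / d l)"
      proof (rule sum.cong)
        fix l
        have "d l > 0" using dpos[rule_format, of l] by linarith
        thus "(s l / sqrt (d l))^2 = (s l)^2 / d l" by (simp add: power_divide)
      qed simp
      have Yn: "(\<Sum>l\<in>UNIV. (s l)^2 / d l) \<le> n"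
        unfolding s_def n_def by (rule iter[OF W01 sym _ dpos PW]) (simp add: d_def)
      have Xnn: "(\<Sum>l\<in>UNIV. W$l$j / d l) \<ge> 0"
        by (rule sum_nonneg) (simp add: Wnn dpos order.trans[OF zero_le_one])
      have "(cs (matpow P (Suc r)) j)^2 \<le> (\<Sum>l\<in>UNIV. W$l$j / d l) * n"
        using CS unfolding X Y using mult_left_mono[OF Yn Xnn] by linarith
      also have "\<dots> \<le> (n * M) * n" using colM[of j] npos by (simp add: mult_right_mono)
      also have "\<dots> = (n * sqrt M)^2" using M0
        by (simp add: power_mult_distrib power2_eq_square)
      finally have "cs (matpow P (Suc r)) j \<le> n * sqrt M"
        by (rule power2_le_imp_le) (use npos Mnn in simp)
      hence "(1/n) * cs (matpow P (Suc r)) j \<le> (1/n) * (n * sqrt M)"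
        by (rule mult_left_mono) (use npos in simp_all)
      also have "\<dots> = sqrt M" using npos by simp
      finally show "(\<Sum>i\<in>UNIV. \<bar>((1 / n) *\<^sub>R matpow P (Suc r)) $ i $ j\<bar>) \<le> 2 * sqrt M"
        using e1 Mnn by linarith
    qed
  qed
  thus ?thesis unfolding M_def n_def .
qed

end
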